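(* Let $S\subset\mathbb{R}^d$ be a nonempty compact convex set with diameter $D:=\sup_{x,y\in S}\|x-y\|$, and let $f$ be differentiable on $S$ with $L$-Lipschitz gradient on $S$ (not necessarily convex). Let $G:=\sup_{x\in S}\|\nabla f(x)\|<\infty$, fix $C\ge\max\{LD^2,\,GD\}$ with $C>0$, and let $f^*:=\inf_{x\in S}f(x)$. Let $\delta\ge0$ and suppose that for every $x\in S$ a vector $g_\delta(x)\in\mathbb{R}^d$ is available with \[ \big|\langle \nabla f(x)-g_\delta(x),\,s-x\rangle\big|\le\delta\quad\text{for all } s\in S. \] Given $x^0\in S$, define iterates for $k=0,1,2,\dots$ by choosing $s^k\in\arg\min_{s\in S}\langle g_\delta(x^k),\,s-x^k\rangle$, setting $\tilde g_k:=\langle g_\delta(x^k),\,x^k-s^k\rangle$, $\overline\alpha_k:=(\tilde g_k-\delta)_+/C$ where $(u)_+:=\max\{u,0\}$, and $x^{k+1}:=x^k+\overline\alpha_k(s^k-x^k)$. Let $\mathcal{G}(x):=\max_{s\in S}\langle\nabla f(x),\,x-s\rangle$ denote the Frank–Wolfe gap. Then for every $K\ge0$, \[ \min_{0\le k\le K}\mathcal{G}(x^k)\le\sqrt{\frac{2C\,(f(x^0)-f^* )}{K+1}}+2\delta . \] In particular, for any $\varepsilon>2\delta$, $\min_{0\le k\le K}\mathcal{G}(x^k)\le\varepsilon$ holds whenever \[ K+1\ge\frac{2C\,(f(x^0)-f^* )}{(\varepsilon-2\delta)^2}. \]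
   Context: $\|\cdot\|$ is the Euclidean norm and $\langle\cdot,\cdot\rangle$ the Euclidean inner product. (In the paper the Frank–Wolfe gap is denoted $G(x)$; here it is written $\mathcal{G}(x)$ to distinguish it from the gradient bound $G$.) *)

theory Defs
  imports "HOL-Analysis.Analysis"
begin

text \<open>Frank--Wolfe gap of f at x over S, given the gradient field grad:
  max over s in S of the inner product of grad x with (x - s).
  (The max is attained since S is compact; we write it as a supremum.)\<close>
definition fw_gap :: "'a::euclidean_space set \<Rightarrow> ('a \<Rightarrow> 'a) \<Rightarrow> 'a \<Rightarrow> real" where
  "fw_gap S grad x = (SUP s\<in>S. grad x \<bullet> (x - s))"

definition pos_part :: "real \<Rightarrow> real" where
  "pos_part u = max u 0"

end

theory Submission imports Defs begin

lemma descent: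
  fixes S :: "'a::euclidean_space set" and f :: "'a \<Rightarrow> real" and grad :: "'a \<Rightarrow> 'a"
  assumes S_convex: "convex S"
    and f_grad: "\<And>y. y \<in> S \<Longrightarrow> (f has_derivative (\<lambda>h. grad y \<bullet> h)) (at y within S)"
    and grad_lip: "\<And>y z. y \<in> S \<Longrightarrow> z \<in> S \<Longrightarrow> norm (grad y - grad z) \<le> L * norm (y - z)"
    and xS: "x \<in> S" and sS: "s \<in> S" and a0: "0 \<le> a" and a1: "a \<le> 1"
  shows "f (x + a *\<^sub>R (s - x)) \<le> f x + a * (grad x \<bullet> (s - x)) + L * a\<^sup>2 * (norm (s - x))\<^sup>2 / 2"
proof (cases "a = 0")
  case True then show ?thesis by simp
next
  case False
  hence apos: "0 < a" using a0 by simp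
  define h where "h = s - x"
  have inS: "x + t *\<^sub>R h \<in> S" if "0 \<le> t" "t \<le> 1" for t
  proof -
    have "x + t *\<^sub>R h = (1 - t) *\<^sub>R x + t *\<^sub>R s" by (simp add: h_def algebra_simps)
    thus ?thesis using convexD[OF S_convex xS sS, of "1-t" t] that by simp
  qed
  define \<psi> where "\<psi> t = f (x + t *\<^sub>R h) - t * (grad x \<bullet> h) - L * t\<^sup>2 * (norm h)\<^sup>2 / 2" for t
  define \<psi>' where "\<psi>' t = (\<lambda>d. grad (x + t *\<^sub>R h) \<bullet> (d *\<^sub>R h) - d * (grad x \<bullet> h) - L * (2 * t * d) * (norm h)\<^sup>2 / 2)" for t
  have der: "(\<psi> has_derivative \<psi>' t) (at t within {0..a})" if "0 \<le> t" "t \<le> a" for t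
  proof -
    have lin: "((\<lambda>t. x + t *\<^sub>R h) has_derivative (\<lambda>d. d *\<^sub>R h)) (at t within {0..a})"
      by (auto intro!: derivative_eq_intros)
    have img: "(\<lambda>t. x + t *\<^sub>R h) ` {0..a} \<subseteq> S" using inS a1 by auto
    have c: "((\<lambda>t. f (x + t *\<^sub>R h)) has_derivative (\<lambda>d. grad (x + t *\<^sub>R h) \<bullet> (d *\<^sub>R h))) (at t within {0..a})"
      using has_derivative_in_compose2[OF f_grad img _ lin] that by simp
    show ?thesis unfolding \<psi>_def \<psi>'_def
      by (rule derivative_eq_intros c refl | simp)+ (auto simp: algebra_simps)
  qed
  obtain \<xi> where xi: "\<xi> \<in> {0<..<a}" and eq: "\<psi> a - \<psi> 0 = \<psi>' \<xi> (a - 0)"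
    using mvt_simple[OF apos der] by auto
  have y: "x + \<xi> *\<^sub>R h \<in> S" using inS xi a1 by auto
  have "\<psi>' \<xi> (a - 0) = a * ((grad (x + \<xi> *\<^sub>R h) - grad x) \<bullet> h - L * \<xi> * (norm h)\<^sup>2)"
    by (simp add: \<psi>'_def algebra_simps inner_diff_left)
  also have "\<dots> \<le> 0"
  proof -
    have "(grad (x + \<xi> *\<^sub>R h) - grad x) \<bullet> h \<le> norm (grad (x + \<xi> *\<^sub>R h) - grad x) * norm h"
      by (rule norm_cauchy_schwarz)
    also have "\<dots> \<le> L * norm (\<xi> *\<^sub>R h) * norm h"
      using grad_lip[OF y xS] by (simp add: mult_right_mono)
    also have "\<dots> = L * \<xi> * (norm h)\<^sup>2" using xi by (simp add: power2_eq_square)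
    finally show ?thesis using apos by (intro mult_nonneg_nonpos) auto
  qed
  finally have "\<psi> a \<le> \<psi> 0" using eq by simp
  thus ?thesis by (simp add: \<psi>_def h_def)
qed

theorem theorem2:
  fixes S :: "'a::euclidean_space set"
    and f :: "'a \<Rightarrow> real" and grad :: "'a \<Rightarrow> 'a"
    and gd :: "'a \<Rightarrow> 'a"
    and L C \<delta> :: real
    and x s :: "nat \<Rightarrow> 'a"
  assumes S_ne: "S \<noteq> {}" and S_compact: "compact S" and S_convex: "convex S"
    and f_grad: "\<And>y. y \<in> S \<Longrightarrow> (f has_derivative (\<lambda>h. grad y \<bullet> h)) (at y within S)"
    and grad_lip: "\<And>y z. y \<in> S \<Longrightarrow> z \<in> S \<Longrightarrow> norm (grad y - grad z) \<le> L * norm (y - z)"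
    and G_fin: "bounded ((\<lambda>y. norm (grad y)) ` S)"
    and C_ge: "C \<ge> max (L * (diameter S)\<^sup>2) ((SUP y\<in>S. norm (grad y)) * diameter S)"
    and C_pos: "C > 0"
    and delta_nn: "\<delta> \<ge> 0"
    and inexact_grad: "\<And>y t. y \<in> S \<Longrightarrow> t \<in> S \<Longrightarrow> \<bar>(grad y - gd y) \<bullet> (t - y)\<bar> \<le> \<delta>"
    and x0: "x 0 \<in> S"
    and s_in: "\<And>k. s k \<in> S"
    and s_min: "\<And>k t. t \<in> S \<Longrightarrow> gd (x k) \<bullet> (s k - x k) \<le> gd (x k) \<bullet> (t - x k)"
    and x_step: "\<And>k. x (Suc k) = x k
        + (pos_part (gd (x k) \<bullet> (x k - s k) - \<delta>) / C) *\<^sub>R (s k - x k)"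
  shows "\<forall>K::nat.
      (MIN k\<in>{0..K}. fw_gap S grad (x k))
        \<le> sqrt (2 * C * (f (x 0) - (INF y\<in>S. f y)) / (real K + 1)) + 2 * \<delta>
    \<and> (\<forall>\<epsilon>. \<epsilon> > 2 * \<delta> \<longrightarrow>
         real K + 1 \<ge> 2 * C * (f (x 0) - (INF y\<in>S. f y)) / (\<epsilon> - 2 * \<delta>)\<^sup>2 \<longrightarrow>
         (MIN k\<in>{0..K}. fw_gap S grad (x k)) \<le> \<epsilon>)"
proof -
  have Sb: "bounded S" using S_compact compact_imp_bounded by blast
  define G where "G = (SUP y\<in>S. norm (grad y))"
  define D where "D = diameter S"
  have normG: "norm (grad y) \<le> G" if "y \<in> S" for y
    unfolding G_def using that bounded_imp_bdd_above[OF G_fin] by (intro cSUP_upper) auto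
  have G0: "0 \<le> G" using normG[OF x0] by (meson norm_ge_zero order_trans)
  have diam: "norm (y - z) \<le> D" if "y \<in> S" "z \<in> S" for y z
    unfolding D_def using diameter_bounded_bound[OF Sb that] by (simp add: dist_norm)
  have D0: "0 \<le> D" using diam[OF x0 x0] by simp
  have CGD: "G * D \<le> C" using C_ge by (simp add: G_def D_def)
  have CLD: "L * D\<^sup>2 \<le> C" using C_ge by (simp add: D_def)
  have Lh: "L * (norm (y - z))\<^sup>2 \<le> C" if "y \<in> S" "z \<in> S" for y z
  proof (cases "L \<ge> 0")
    case True
    have "(norm (y - z))\<^sup>2 \<le> D\<^sup>2" using diam[OF that] by (simp add: power_mono)
    hence "L * (norm (y - z))\<^sup>2 \<le> L * D\<^sup>2" using True by (simp add: mult_left_mono)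
    thus ?thesis using CLD by simp
  next
    case False
    hence "L * (norm (y - z))\<^sup>2 \<le> 0" by (simp add: mult_nonpos_nonneg)
    thus ?thesis using C_pos by simp
  qed
  define gt where "gt k = gd (x k) \<bullet> (x k - s k)" for k
  define al where "al k = pos_part (gt k - \<delta>) / C" for k
  have al0: "0 \<le> al k" for k using C_pos by (simp add: al_def pos_part_def)
  have step_ok: "al k \<le> 1" if xk: "x k \<in> S" for k
  proof -
    have "gt k = grad (x k) \<bullet> (x k - s k) - (grad (x k) - gd (x k)) \<bullet> (x k - s k)"
      by (simp add: gt_def inner_diff_left)
    also have "\<dots> \<le> norm (grad (x k)) * norm (x k - s k) + \<delta>"
    proof -
      have "grad (x k) \<bullet> (x k - s k) \<le> norm (grad (x k)) * norm (x k - s k)"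
        by (rule norm_cauchy_schwarz)
      moreover have "\<bar>(grad (x k) - gd (x k)) \<bullet> (s k - x k)\<bar> \<le> \<delta>" using inexact_grad[OF xk s_in] .
      moreover have "(grad (x k) - gd (x k)) \<bullet> (x k - s k) = - ((grad (x k) - gd (x k)) \<bullet> (s k - x k))"
        by (simp add: inner_diff_right)
      ultimately show ?thesis by linarith
    qed
    also have "\<dots> \<le> G * D + \<delta>"
      using mult_mono[OF normG[OF xk] diam[OF xk s_in] G0 norm_ge_zero] by simp
    finally have "gt k - \<delta> \<le> C" using CGD by simp
    thus ?thesis using C_pos by (simp add: al_def pos_part_def)
  qed
  have xin: "x k \<in> S" for k
  proof (induction k)
    case 0 then show ?case using x0 .
  next
    case (Suc k)
    have "x (Suc k) = (1 - al k) *\<^sub>R x k + al k *\<^sub>R s k"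
      by (simp add: x_step al_def gt_def algebra_simps)
    thus ?case using convexD[OF S_convex Suc s_in, of "1 - al k" "al k"] al0 step_ok[OF Suc] by simp
  qed
  have decr: "f (x (Suc k)) \<le> f (x k) - (pos_part (gt k - \<delta>))\<^sup>2 / (2 * C)" for k
  proof -
    have xs: "x (Suc k) = x k + al k *\<^sub>R (s k - x k)" by (simp add: x_step al_def gt_def)
    have "f (x (Suc k)) \<le> f (x k) + al k * (grad (x k) \<bullet> (s k - x k)) + L * (al k)\<^sup>2 * (norm (s k - x k))\<^sup>2 / 2"
      unfolding xs by (rule descent[OF S_convex f_grad grad_lip xin s_in al0 step_ok[OF xin]])
    also have "\<dots> \<le> f (x k) + al k * (\<delta> - gt k) + C * (al k)\<^sup>2 / 2"
    proof -
      have "grad (x k) \<bullet> (s k - x k) = gd (x k) \<bullet> (s k - x k) + (grad (x k) - gd (x k)) \<bullet> (s k - x k)"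
        by (simp add: inner_diff_left)
      moreover have "\<bar>(grad (x k) - gd (x k)) \<bullet> (s k - x k)\<bar> \<le> \<delta>" using inexact_grad[OF xin s_in] .
      moreover have "gd (x k) \<bullet> (s k - x k) = - gt k" by (simp add: gt_def inner_diff_right)
      ultimately have "grad (x k) \<bullet> (s k - x k) \<le> \<delta> - gt k" by linarith
      hence 1: "al k * (grad (x k) \<bullet> (s k - x k)) \<le> al k * (\<delta> - gt k)" using al0 mult_left_mono by blast
      have "L * (norm (s k - x k))\<^sup>2 \<le> C" using Lh[OF s_in xin] .
      hence "(al k)\<^sup>2 * (L * (norm (s k - x k))\<^sup>2) \<le> (al k)\<^sup>2 * C" by (simp add: mult_left_mono)
      hence "L * (al k)\<^sup>2 * (norm (s k - x k))\<^sup>2 / 2 \<le> C * (al k)\<^sup>2 / 2" by (simp add: algebra_simps)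
      thus ?thesis using 1 by linarith
    qed
    also have "\<dots> = f (x k) - (pos_part (gt k - \<delta>))\<^sup>2 / (2 * C)"
    proof -
      have pp: "pos_part (gt k - \<delta>) * (gt k - \<delta>) = (pos_part (gt k - \<delta>))\<^sup>2"
        by (simp add: pos_part_def power2_eq_square max_def)
      show ?thesis using C_pos pp unfolding al_def
        by (simp add: field_simps power2_eq_square)
    qed
    finally show ?thesis .
  qed
  have fcont: "continuous_on S f"
    using f_grad has_derivative_continuous continuous_on_eq_continuous_within by blast
  have fbdd: "bdd_below (f ` S)"
    by (rule bounded_imp_bdd_below, rule compact_imp_bounded, rule compact_continuous_image[OF fcont S_compact])
  define fs where "fs = (INF y\<in>S. f y)"
  have fs_le: "fs \<le> f y" if "y \<in> S" for y unfolding fs_def using fbdd that by (intro cINF_lower) auto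
  have tele: "(\<Sum>k<n. (pos_part (gt k - \<delta>))\<^sup>2) \<le> 2 * C * (f (x 0) - f (x n))" for n
  proof (induction n)
    case 0 then show ?case by simp
  next
    case (Suc n)
    have "(pos_part (gt n - \<delta>))\<^sup>2 \<le> 2 * C * (f (x n) - f (x (Suc n)))"
      using decr[of n] C_pos by (simp add: field_simps)
    thus ?case using Suc by (simp add: algebra_simps)
  qed
  define g where "g k = fw_gap S grad (x k)" for k
  have gap: "g k \<le> gt k + \<delta>" for k
    unfolding g_def fw_gap_def
  proof (rule cSUP_least[OF S_ne])
    fix t assume t: "t \<in> S"
    have "grad (x k) \<bullet> (x k - t) = gd (x k) \<bullet> (x k - t) + (grad (x k) - gd (x k)) \<bullet> (x k - t)"
      by (simp add: inner_diff_left)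
    moreover have "\<bar>(grad (x k) - gd (x k)) \<bullet> (t - x k)\<bar> \<le> \<delta>" using inexact_grad[OF xin t] .
    moreover have "(grad (x k) - gd (x k)) \<bullet> (x k - t) = - ((grad (x k) - gd (x k)) \<bullet> (t - x k))"
      by (simp add: inner_diff_right)
    moreover have "gd (x k) \<bullet> (x k - t) \<le> gt k"
      using s_min[OF t, of k] by (simp add: gt_def inner_diff_right)
    ultimately show "grad (x k) \<bullet> (x k - t) \<le> gt k + \<delta>" by linarith
  qed
  have main: "(MIN k\<in>{0..K}. g k) \<le> sqrt (2 * C * (f (x 0) - fs) / (real K + 1)) + 2 * \<delta>" for K
  proof -
    define m where "m = (MIN k\<in>{0..K}. g k)"
    have mle: "m \<le> g k" if "k \<in> {0..K}" for k unfolding m_def using that by simp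
    show ?thesis
    proof (cases "m \<le> 2 * \<delta>")
      case True
      have "0 \<le> sqrt (2 * C * (f (x 0) - fs) / (real K + 1))" using fs_le[OF x0] C_pos by simp
      then show ?thesis unfolding m_def[symmetric] using True by linarith
    next
      case False
      have each: "(m - 2 * \<delta>)\<^sup>2 \<le> (pos_part (gt k - \<delta>))\<^sup>2" if "k \<in> {0..K}" for k
      proof -
        have "0 \<le> m - 2 * \<delta>" "m - 2 * \<delta> \<le> pos_part (gt k - \<delta>)"
          using False mle[OF that] gap[of k] by (auto simp: pos_part_def)
        thus ?thesis by (simp add: power_mono)
      qed
      have "real (Suc K) * (m - 2 * \<delta>)\<^sup>2 = (\<Sum>k<Suc K. (m - 2 * \<delta>)\<^sup>2)" by simp
      also have "\<dots> \<le> (\<Sum>k<Suc K. (pos_part (gt k - \<delta>))\<^sup>2)"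
        by (rule sum_mono) (use each in auto)
      also have "\<dots> \<le> 2 * C * (f (x 0) - f (x (Suc K)))" by (rule tele)
      also have "\<dots> \<le> 2 * C * (f (x 0) - fs)" using fs_le[OF xin] C_pos by simp
      finally have "(m - 2 * \<delta>)\<^sup>2 \<le> 2 * C * (f (x 0) - fs) / (real K + 1)"
        by (simp add: field_simps)
      hence "sqrt ((m - 2 * \<delta>)\<^sup>2) \<le> sqrt (2 * C * (f (x 0) - fs) / (real K + 1))"
        using real_sqrt_le_mono by blast
      thus ?thesis using False unfolding m_def[symmetric] by simp
    qed
  qed
  show ?thesis
  proof (intro allI conjI impI)
    fix K :: nat
    show "(MIN k\<in>{0..K}. fw_gap S grad (x k)) \<le> sqrt (2 * C * (f (x 0) - (INF y\<in>S. f y)) / (real K + 1)) + 2 * \<delta>"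
      using main[of K] by (simp add: g_def fs_def)
    fix \<epsilon> :: real
    assume e: "\<epsilon> > 2 * \<delta>" and K: "real K + 1 \<ge> 2 * C * (f (x 0) - (INF y\<in>S. f y)) / (\<epsilon> - 2 * \<delta>)\<^sup>2"
    have ep: "(\<epsilon> - 2 * \<delta>)\<^sup>2 > 0" using e by simp
    have "2 * C * (f (x 0) - fs) \<le> (real K + 1) * (\<epsilon> - 2 * \<delta>)\<^sup>2"
      using K ep by (simp add: fs_def pos_divide_le_eq)
    hence h: "2 * C * (f (x 0) - fs) / (real K + 1) \<le> (\<epsilon> - 2 * \<delta>)\<^sup>2"
      by (simp add: pos_divide_le_eq mult.commute)
    have "sqrt (2 * C * (f (x 0) - fs) / (real K + 1)) \<le> \<epsilon> - 2 * \<delta>"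
    proof -
      have "sqrt (2 * C * (f (x 0) - fs) / (real K + 1)) \<le> sqrt ((\<epsilon> - 2 * \<delta>)\<^sup>2)"
        using h by (rule real_sqrt_le_mono)
      also have "\<dots> = \<epsilon> - 2 * \<delta>" using e by simp
      finally show ?thesis .
    qed
    thus "(MIN k\<in>{0..K}. fw_gap S grad (x k)) \<le> \<epsilon>"
      using main[of K] by (simp add: g_def)
  qed
qed

end
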